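(* Let $\mathcal{Y}$ be a finite set, let $\mathbb{P}_t$, $p_t$, $q_t$ be probability distributions on $\mathcal{Y}$, let $z \in \mathcal{Y}$ with $p_t(z) > 0$, and let $\alpha, \eta \in \mathbb{R}$. Let $\ell$ be the 0-1 loss $\ell(y, p) = \mathbb{I}\{y \neq \arg\max_{y'} p(y')\}$ (with a fixed tie-breaking rule for the argmax). For $r \in \{0,1\}$ define $$L(r) = \mathbb{E}_{y \sim \mathbb{P}_t}\Big[ r \cdot \big(\ell(y, p_t) + \alpha \cdot D_{\mathrm{TV}}(p_t, q_t)\big) + (1 - r) \cdot \Big(\ell(y, q_t) + \eta \cdot \frac{q_t(z)}{p_t(z)}\Big)\Big].$$ Define $\hat r \in \{0,1\}$ by $\hat r = 1$ if and only if $$\max_{y} q_t(y) < \max_{y} p_t(y) - \alpha \cdot D_{\mathrm{TV}}(p_t, q_t) + \eta \cdot \frac{q_t(z)}{p_t(z)}.$$ Then $$L(\hat r) - \min_{r \in \{0,1\}} L(r) \le \max_{y \in \mathcal{Y}} |\mathbb{P}_t(y) - q_t(y)| + \max_{y \in \mathcal{Y}} |\mathbb{P}_t(y) - p_t(y)|.$$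
   Context: $D_{\mathrm{TV}}(p,q) = \frac{1}{2}\sum_{y \in \mathcal{Y}} |p(y) - q(y)|$ is the total variation distance. Interpretation (not needed formally): $\mathcal{Y}$ is a token vocabulary, $q_t$ and $p_t$ are the next-token distributions of a draft model and a reference (verifier) model given a fixed prefix $x_{<t}$ and retrieved chunk $z$, $\mathbb{P}_t$ is the true next-token distribution, $r$ is the rejection decision, and $\hat r$ is the plug-in confidence-based rejection rule. *)

theory Defs
  imports Complex_Main
begin

definition is_distr :: "('y::finite \<Rightarrow> real) \<Rightarrow> bool" where
  "is_distr p \<longleftrightarrow> (\<forall>y. 0 \<le> p y) \<and> (\<Sum>y\<in>UNIV. p y) = 1"

definition tv_dist :: "('y::finite \<Rightarrow> real) \<Rightarrow> ('y \<Rightarrow> real) \<Rightarrow> real" where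
  "tv_dist p q = (1/2) * (\<Sum>y\<in>UNIV. \<bar>p y - q y\<bar>)"

text \<open>0-1 loss w.r.t. a fixed argmax (tie-breaking) rule am.\<close>
definition zero_one_loss :: "(('y \<Rightarrow> real) \<Rightarrow> 'y) \<Rightarrow> 'y \<Rightarrow> ('y \<Rightarrow> real) \<Rightarrow> real" where
  "zero_one_loss am y p = (if y \<noteq> am p then 1 else 0)"

definition rej_loss ::
  "(('y::finite \<Rightarrow> real) \<Rightarrow> 'y) \<Rightarrow> ('y \<Rightarrow> real) \<Rightarrow> ('y \<Rightarrow> real) \<Rightarrow> ('y \<Rightarrow> real)
    \<Rightarrow> 'y \<Rightarrow> real \<Rightarrow> real \<Rightarrow> real \<Rightarrow> real" where
  "rej_loss am P p q z \<alpha> \<eta> r =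
     (\<Sum>y\<in>UNIV. P y * (r * (zero_one_loss am y p + \<alpha> * tv_dist p q)
        + (1 - r) * (zero_one_loss am y q + \<eta> * (q z / p z))))"

definition rhat ::
  "('y::finite \<Rightarrow> real) \<Rightarrow> ('y \<Rightarrow> real) \<Rightarrow> 'y \<Rightarrow> real \<Rightarrow> real \<Rightarrow> real" where
  "rhat p q z \<alpha> \<eta> =
     (if Max (range q) < Max (range p) - \<alpha> * tv_dist p q + \<eta> * (q z / p z) then 1 else 0)"

end

theory Submission
  imports Defs
begin

lemma loss_sum:
  fixes P :: "'y::finite \<Rightarrow> real"
  assumes "is_distr P"
  shows "(\<Sum>y\<in>UNIV. P y * zero_one_loss am y f) = 1 - P (am f)"
proof -
  have "(\<Sum>y\<in>UNIV. P y * zero_one_loss am y f) = (\<Sum>y\<in>UNIV. P y - (if y = am f then P y else 0))"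
    by (rule sum.cong) (auto simp: zero_one_loss_def)
  also have "\<dots> = (\<Sum>y\<in>UNIV. P y) - P (am f)"
    by (simp add: sum_subtractf)
  finally show ?thesis using assms by (simp add: is_distr_def)
qed

lemma rej_loss_eq:
  fixes P p q :: "'y::finite \<Rightarrow> real"
  assumes "is_distr P"
  shows "rej_loss am P p q z \<alpha> \<eta> r = r * (1 - P (am p) + \<alpha> * tv_dist p q)
        + (1 - r) * (1 - P (am q) + \<eta> * (q z / p z))"
proof -
  have "rej_loss am P p q z \<alpha> \<eta> r = (\<Sum>y\<in>UNIV. r * (P y * zero_one_loss am y p) + (1 - r) * (P y * zero_one_loss am y q)
      + P y * (r * (\<alpha> * tv_dist p q) + (1 - r) * (\<eta> * (q z / p z))))"
    unfolding rej_loss_def by (rule sum.cong) (auto simp: algebra_simps)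
  also have "\<dots> = r * (\<Sum>y\<in>UNIV. P y * zero_one_loss am y p) + (1 - r) * (\<Sum>y\<in>UNIV. P y * zero_one_loss am y q)
      + (\<Sum>y\<in>UNIV. P y) * (r * (\<alpha> * tv_dist p q) + (1 - r) * (\<eta> * (q z / p z)))"
    by (simp add: sum.distrib sum_distrib_left sum_distrib_right)
  finally show ?thesis using assms by (simp add: loss_sum is_distr_def algebra_simps)
qed

lemma max_range_am:
  fixes f :: "'y::finite \<Rightarrow> real"
  assumes "\<And>f y. f y \<le> f (am f)"
  shows "Max (range f) = f (am f)"
  using assms by (intro Max_eqI) auto

theorem lemma2:
  fixes P p q :: "'y::finite \<Rightarrow> real" and z :: 'y and \<alpha> \<eta> :: real
    and am :: "('y \<Rightarrow> real) \<Rightarrow> 'y"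
  assumes "is_distr P" and "is_distr p" and "is_distr q"
    and "p z > 0"
    and am_argmax: "\<And>f y. f y \<le> f (am f)"
  shows "rej_loss am P p q z \<alpha> \<eta> (rhat p q z \<alpha> \<eta>)
           - min (rej_loss am P p q z \<alpha> \<eta> 0) (rej_loss am P p q z \<alpha> \<eta> 1)
         \<le> Max (range (\<lambda>y. \<bar>P y - q y\<bar>)) + Max (range (\<lambda>y. \<bar>P y - p y\<bar>))"
proof -
  have mq: "\<bar>P (am q) - q (am q)\<bar> \<le> Max (range (\<lambda>y. \<bar>P y - q y\<bar>))"
    by (rule Max_ge) auto
  have mp: "\<bar>P (am p) - p (am p)\<bar> \<le> Max (range (\<lambda>y. \<bar>P y - p y\<bar>))"
    by (rule Max_ge) auto
  have rq: "Max (range q) = q (am q)" and rp: "Max (range p) = p (am p)"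
    using max_range_am[OF am_argmax] by auto
  define A where "A = Max (range (\<lambda>y. \<bar>P y - q y\<bar>))"
  define B where "B = Max (range (\<lambda>y. \<bar>P y - p y\<bar>))"
  define c where "c = \<eta> * (q z / p z)"
  define t where "t = \<alpha> * tv_dist p q"
  have "rej_loss am P p q z \<alpha> \<eta> (rhat p q z \<alpha> \<eta>)
           - min (rej_loss am P p q z \<alpha> \<eta> 0) (rej_loss am P p q z \<alpha> \<eta> 1) \<le> A + B"
    using mq mp unfolding rej_loss_eq[OF assms(1)] rhat_def rq rp A_def[symmetric] B_def[symmetric]
      c_def[symmetric] t_def[symmetric]
    by (auto simp: abs_le_iff min_def)
  then show ?thesis by (simp add: A_def B_def)
qed

end
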